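(* Consider six spin-$\frac12$ particles with Hilbert space $(\mathbb{C}^2)^{\otimes 6}$ and standard product basis. For a pair of spins $i\neq j$ let $P_{ij}$ be the operator swapping spins $i$ and $j$, and for $\alpha\in\mathbb{R}$ let $\mathrm{SWAP}_{ij}^{\alpha}=\frac{1+P_{ij}}{2}+e^{i\pi\alpha}\frac{1-P_{ij}}{2}$. For pairs $(i_1,j_1),\ldots,(i_n,j_n)$ and $\alpha_1,\ldots,\alpha_n\in\mathbb{R}$ let $$U(\alpha_1,\ldots,\alpha_n)=\mathrm{SWAP}_{i_nj_n}^{\alpha_n}\cdots\mathrm{SWAP}_{i_1j_1}^{\alpha_1}.$$ For $s\in\{0,1\}$ let $e^{(s)}_1,\ldots,e^{(s)}_4$ be the four logical two-qubit basis states lying in the total-spin-$s$ subspace (these are fixed vectors with real coefficients in the standard product basis), write $U^{(s)}_{ab}=\langle e^{(s)}_a|U|e^{(s)}_b\rangle$, and define $$d_{\rm FW}(U)=\Big[2-\tfrac14\big|U^{(0)}_{11}+U^{(0)}_{22}+U^{(0)}_{34}+U^{(0)}_{43}\big|-\tfrac14\big|U^{(1)}_{11}+U^{(1)}_{22}+U^{(1)}_{34}+U^{(1)}_{43}\big|\Big]^{1/2}.$$ Then for all $\alpha_1,\ldots,\alpha_n$, $$d_{\rm FW}(U(\alpha_1,\ldots,\alpha_n))=d_{\rm FW}(U(2-\alpha_1,\ldots,2-\alpha_n)).$$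
   Context: Exchange-only encoding: two logical qubits $A$ and $B$ are each encoded in three physical spins (spins $A1,A2,A3$ and $B1,B2,B3$). A single logical qubit in spins labeled 1,2,3 is spanned by $\ket{0}_l=(\ket{010}-\ket{100})/\sqrt2$ and $\ket{1}_l=(2\ket{001}-\ket{010}-\ket{100})/\sqrt6$ (and analogous states in other spin sectors), all having real coefficients; the two-logical-qubit basis states $e^{(s)}_a$ ($a=1,\ldots,4$, ordered as $\ket{00}_l,\ket{01}_l,\ket{10}_l,\ket{11}_l$) within the subspace of total spin $s$ of the six spins are formed from these by real Clebsch–Gordan coupling, so they have real coefficients. $d_{\rm FW}$ measures the distance of $U$ from the logical CNOT gate, allowing independent phases in the total-spin-0 and total-spin-1 sectors. *)

theory Defs
  imports "HOL-Analysis.Analysis"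
begin

text \<open>The six physical spins: A1,A2,A3 encode logical qubit A, B1,B2,B3 encode logical qubit B.\<close>
datatype spin = A1 | A2 | A3 | B1 | B2 | B3

lemma UNIV_spin: "(UNIV :: spin set) = {A1, A2, A3, B1, B2, B3}"
  using spin.exhaust by auto

instance spin :: finite
  by standard (simp add: UNIV_spin)

text \<open>Product basis configurations of the six spins: False encodes 0, True encodes 1.
  The Hilbert space (C^2)^{tensor 6} is the space of vectors indexed by configurations.\<close>
type_synonym conf = "bool ^ spin"
type_synonym state6 = "complex ^ conf"
type_synonym op6 = "complex ^ conf ^ conf"

definition swap_conf :: "spin \<Rightarrow> spin \<Rightarrow> conf \<Rightarrow> conf" where
  "swap_conf i j x = (\<chi> k. if k = i then x $ j else if k = j then x $ i else x $ k)"

definition Pswap :: "spin \<Rightarrow> spin \<Rightarrow> op6" where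
  "Pswap i j = (\<chi> x y. if y = swap_conf i j x then 1 else 0)"

definition SWAPpow :: "spin \<Rightarrow> spin \<Rightarrow> real \<Rightarrow> op6" where
  "SWAPpow i j \<alpha> = (\<chi> x y. (mat 1 + Pswap i j) $ x $ y / 2
       + exp (\<i> * complex_of_real (pi * \<alpha>)) * (mat 1 - Pswap i j) $ x $ y / 2)"

text \<open>U(alpha_1..alpha_n) = SWAP_{i_n j_n}^{alpha_n} ... SWAP_{i_1 j_1}^{alpha_1}
  (the first pair in the list acts first).\<close>
definition Ugate :: "(spin \<times> spin) list \<Rightarrow> real list \<Rightarrow> op6" where
  "Ugate ps as = foldl (\<lambda>A ((i, j), a). SWAPpow i j a ** A) (mat 1) (zip ps as)"

definition ind3 :: "bool \<times> bool \<times> bool \<Rightarrow> bool \<times> bool \<times> bool \<Rightarrow> real" where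
  "ind3 b c = (if b = c then 1 else 0)"

text \<open>Logical qubit states of three spins, in the m = +1/2 sector (qp) and the
  m = -1/2 sector (qm, obtained from qp by the total spin lowering operator, 0 -> 1).
  Argument l = False is logical 0, l = True is logical 1.\<close>
definition qp :: "bool \<Rightarrow> bool \<times> bool \<times> bool \<Rightarrow> real" where
  "qp l b = (if \<not> l then (ind3 b (False, True, False) - ind3 b (True, False, False)) / sqrt 2
             else (2 * ind3 b (False, False, True) - ind3 b (False, True, False)
                   - ind3 b (True, False, False)) / sqrt 6)"

definition qm :: "bool \<Rightarrow> bool \<times> bool \<times> bool \<Rightarrow> real" where
  "qm l b = (if \<not> l then (ind3 b (False, True, True) - ind3 b (True, False, True)) / sqrt 2
             else (ind3 b (True, False, True) + ind3 b (False, True, True)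
                   - 2 * ind3 b (True, True, False)) / sqrt 6)"

definition tensorAB :: "(bool \<times> bool \<times> bool \<Rightarrow> real) \<Rightarrow> (bool \<times> bool \<times> bool \<Rightarrow> real) \<Rightarrow> conf \<Rightarrow> real" where
  "tensorAB f g x = f (x $ A1, x $ A2, x $ A3) * g (x $ B1, x $ B2, x $ B3)"

text \<open>Two-logical-qubit basis states e^{(s)}_a, a = 1..4 ordered |00>,|01>,|10>,|11>,
  in the total-spin-s sector (s = 0 or 1, magnetic quantum number 0), obtained by
  Clebsch-Gordan coupling of the two spin-1/2 logical qubits.\<close>
definition elog :: "nat \<Rightarrow> nat \<Rightarrow> state6" where
  "elog s a = (let la = ((a - 1) div 2 = 1); lb = ((a - 1) mod 2 = 1);
                   \<sigma> = (if s = 0 then -1 else 1 :: real) in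
     (\<chi> x. complex_of_real ((tensorAB (qp la) (qm lb) x + \<sigma> * tensorAB (qm la) (qp lb) x) / sqrt 2)))"

definition braket :: "state6 \<Rightarrow> op6 \<Rightarrow> state6 \<Rightarrow> complex" where
  "braket u A v = (\<Sum>x\<in>UNIV. cnj (u $ x) * (A *v v) $ x)"

definition Ulog :: "nat \<Rightarrow> op6 \<Rightarrow> nat \<Rightarrow> nat \<Rightarrow> complex" where
  "Ulog s U a b = braket (elog s a) U (elog s b)"

definition dFW :: "op6 \<Rightarrow> real" where
  "dFW U = sqrt (2
     - cmod (Ulog 0 U 1 1 + Ulog 0 U 2 2 + Ulog 0 U 3 4 + Ulog 0 U 4 3) / 4
     - cmod (Ulog 1 U 1 1 + Ulog 1 U 2 2 + Ulog 1 U 3 4 + Ulog 1 U 4 3) / 4)"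

end

theory Submission
  imports Defs
begin

definition cnjM :: "op6 \<Rightarrow> op6" where
  "cnjM A = (\<chi> x y. cnj (A $ x $ y))"

lemma exp_refl: "exp (\<i> * complex_of_real (pi * (2 - a))) = cnj (exp (\<i> * complex_of_real (pi * a)))"
proof -
  have "\<i> * complex_of_real (pi * (2 - a)) = 2 * pi * \<i> + cnj (\<i> * complex_of_real (pi * a))"
    by (simp add: algebra_simps)
  then show ?thesis by (simp add: exp_add exp_cnj del: complex_cnj_mult)
qed

lemma SWAP_refl: "SWAPpow i j (2 - a) = cnjM (SWAPpow i j a)"
  unfolding SWAPpow_def cnjM_def exp_refl
  by (simp add: Pswap_def mat_def if_distrib vec_eq_iff del: of_real_mult)

lemma cnjM_mult: "cnjM (A ** B) = cnjM A ** cnjM B"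
  unfolding cnjM_def matrix_matrix_mult_def by (simp add: vec_eq_iff)

lemma cnjM_one: "cnjM (mat 1) = mat 1"
  unfolding cnjM_def mat_def by (simp add: vec_eq_iff)

lemma fold_refl:
  "length ps = length as \<Longrightarrow>
   foldl (\<lambda>A ((i, j), a). SWAPpow i j a ** A) (cnjM M) (zip ps (map (\<lambda>a. 2 - a) as))
   = cnjM (foldl (\<lambda>A ((i, j), a). SWAPpow i j a ** A) M (zip ps as))"
proof (induction ps arbitrary: as M)
  case Nil then show ?case by simp
next
  case (Cons p ps)
  then obtain b bs where as: "as = b # bs" by (cases as) auto
  obtain i j where p: "p = (i, j)" by (cases p)
  have "SWAPpow i j (2 - b) ** cnjM M = cnjM (SWAPpow i j b ** M)"
    by (simp add: SWAP_refl cnjM_mult)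
  then show ?case using Cons as p by simp
qed

lemma Ugate_refl: "length ps = length as \<Longrightarrow>
  Ugate ps (map (\<lambda>a. 2 - a) as) = cnjM (Ugate ps as)"
  unfolding Ugate_def using fold_refl[of ps as "mat 1"] by (simp add: cnjM_one)

lemma elog_real: "cnj (elog s a $ x) = elog s a $ x"
  unfolding elog_def Let_def by simp

lemma braket_cnj: "braket (elog s a) (cnjM A) (elog s b) = cnj (braket (elog s a) A (elog s b))"
  unfolding braket_def cnjM_def matrix_vector_mult_def
  by (simp add: elog_real cnj_sum)

lemma Ulog_cnj: "Ulog s (cnjM A) a b = cnj (Ulog s A a b)"
  unfolding Ulog_def by (rule braket_cnj)

theorem mainTheorem3:
  fixes ps :: "(spin \<times> spin) list" and as :: "real list"
  assumes "length ps = length as"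
    and "\<forall>(i, j) \<in> set ps. i \<noteq> j"
  shows "dFW (Ugate ps as) = dFW (Ugate ps (map (\<lambda>a. 2 - a) as))"
proof -
  have e: "\<And>w x y z. cmod (cnj w + cnj x + cnj y + cnj z) = cmod (w + x + y + z)"
    by (metis complex_cnj_add complex_mod_cnj)
  show ?thesis unfolding Ugate_refl[OF assms(1)] dFW_def Ulog_cnj e ..
qed

end
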